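(* In the deterministic generalized top-$k$ selective gossip setting described in the context (with $G$ connected), for any two edges $\{a,b\},\{a',b'\}\in E$ we have $\alpha_{ab}=\alpha_{a'b'}$.
   Context: Fix integers $m\ge2$, $n\ge1$, $k\in[n]$. For $v\in\mathbb{R}^n$ let $\sigma$ be a permutation of $[n]$ with $v_{\sigma(1)}\ge\cdots\ge v_{\sigma(n)}$ and set $T_k(v)=\{j\in[n]: v_j\ge v_{\sigma(k)}\}$. Let $\{i_1(t),i_2(t)\}_{t\ge0}$ be a deterministic sequence of unordered pairs of distinct agents in $[m]$, and let $E$ be the set of pairs $\{a,b\}$ with $\{i_1(t),i_2(t)\}=\{a,b\}$ for infinitely many $t$; assume the graph $G=([m],E)$ is connected. Let $X(0)\in\mathbb{R}^{m\times n}$ and define $X(t)$ by: $S(t)=T_k(X_{i_1(t)}(t))\cup T_k(X_{i_2(t)}(t))$ (where $X_i(t)$ is row $i$), $X_{ij}(t+1)=\tfrac12(X_{i_1(t)j}(t)+X_{i_2(t)j}(t))$ if $i\in\{i_1(t),i_2(t)\}$ and $j\in S(t)$, and $X_{ij}(t+1)=X_{ij}(t)$ otherwise. The limit $X(\infty)=\lim_{t\to\infty}X(t)$ exists. For $\{a,b\}\in E$ let $\beta_{ab}(s)$ be the $s$-th time $t$ with $\{i_1(t),i_2(t)\}=\{a,b\}$, let $S^\infty_{ab}=\bigcap_{t\ge0}\bigcup_{s\ge t}S(\beta_{ab}(s))$, and $\alpha_{ab}=\min_{j\in S^\infty_{ab}}X_{aj}(\infty)$ (which also equals $\min_{j\in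 S^\infty_{ab}}X_{bj}(\infty)$). *)

theory Defs
  imports Complex_Main "HOL-Library.Infinite_Set"
begin

text \<open>Agents are indexed by {0..<m}, items (columns) by {0..<n}.
  A vector v in R^n is a function nat => real, only values at j < n matter.\<close>

text \<open>k-th largest entry of v (with multiplicity), i.e. v_(sigma(k)) for a
  decreasing sorting permutation sigma; k ranges over 1..n.\<close>
definition kth_largest :: "nat \<Rightarrow> nat \<Rightarrow> (nat \<Rightarrow> real) \<Rightarrow> real" where
  "kth_largest n k v = rev (sort (map v [0..<n])) ! (k - 1)"

definition topk :: "nat \<Rightarrow> nat \<Rightarrow> (nat \<Rightarrow> real) \<Rightarrow> nat set" where
  "topk n k v = {j. j < n \<and> v j \<ge> kth_largest n k v}"

definition sel_set :: "nat \<Rightarrow> nat \<Rightarrow> (nat \<Rightarrow> nat \<Rightarrow> nat \<Rightarrow> real) \<Rightarrow> (nat \<Rightarrow> nat)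
    \<Rightarrow> (nat \<Rightarrow> nat) \<Rightarrow> nat \<Rightarrow> nat set" where
  "sel_set n k X i1 i2 t = topk n k (X t (i1 t)) \<union> topk n k (X t (i2 t))"

definition gossip_dynamics :: "nat \<Rightarrow> nat \<Rightarrow> (nat \<Rightarrow> nat \<Rightarrow> nat \<Rightarrow> real) \<Rightarrow> (nat \<Rightarrow> nat)
    \<Rightarrow> (nat \<Rightarrow> nat) \<Rightarrow> bool" where
  "gossip_dynamics n k X i1 i2 \<longleftrightarrow>
     (\<forall>t i j. X (Suc t) i j =
        (if i \<in> {i1 t, i2 t} \<and> j \<in> sel_set n k X i1 i2 t
         then (X t (i1 t) j + X t (i2 t) j) / 2 else X t i j))"

definition act_times :: "(nat \<Rightarrow> nat) \<Rightarrow> (nat \<Rightarrow> nat) \<Rightarrow> nat \<Rightarrow> nat \<Rightarrow> nat set" where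
  "act_times i1 i2 a b = {t. {i1 t, i2 t} = {a, b}}"

definition edges :: "(nat \<Rightarrow> nat) \<Rightarrow> (nat \<Rightarrow> nat) \<Rightarrow> nat set set" where
  "edges i1 i2 = {e. \<exists>a b. e = {a, b} \<and> infinite (act_times i1 i2 a b)}"

definition graph_connected :: "nat \<Rightarrow> nat set set \<Rightarrow> bool" where
  "graph_connected m E \<longleftrightarrow>
     (\<forall>a<m. \<forall>b<m. (a, b) \<in> (Restr {(x, y). {x, y} \<in> E} {0..<m})\<^sup>*)"

text \<open>beta_ab(s): the s-th activation time of {a,b} (counting from s = 0).\<close>
definition beta :: "(nat \<Rightarrow> nat) \<Rightarrow> (nat \<Rightarrow> nat) \<Rightarrow> nat \<Rightarrow> nat \<Rightarrow> nat \<Rightarrow> nat" where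
  "beta i1 i2 a b s = Infinite_Set.enumerate (act_times i1 i2 a b) s"

definition S_inf :: "nat \<Rightarrow> nat \<Rightarrow> (nat \<Rightarrow> nat \<Rightarrow> nat \<Rightarrow> real) \<Rightarrow> (nat \<Rightarrow> nat)
    \<Rightarrow> (nat \<Rightarrow> nat) \<Rightarrow> nat \<Rightarrow> nat \<Rightarrow> nat set" where
  "S_inf n k X i1 i2 a b =
     (\<Inter>t. \<Union>s\<in>{t..}. sel_set n k X i1 i2 (beta i1 i2 a b s))"

definition alpha :: "nat \<Rightarrow> nat \<Rightarrow> (nat \<Rightarrow> nat \<Rightarrow> nat \<Rightarrow> real) \<Rightarrow> (nat \<Rightarrow> nat)
    \<Rightarrow> (nat \<Rightarrow> nat) \<Rightarrow> (nat \<Rightarrow> nat \<Rightarrow> real) \<Rightarrow> nat \<Rightarrow> nat \<Rightarrow> real" where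
  "alpha n k X i1 i2 Xinf a b = Min ((\<lambda>j. Xinf a j) ` S_inf n k X i1 i2 a b)"

end

theory Submission imports Defs "HOL-Library.Multiset" begin

lemma card_count: "card {j. j < n \<and> P (v j)} = length (filter P (sort (map v [0..<n])))"
proof -
  have "length (filter P (sort (map v [0..<n]))) = length (filter P (map v [0..<n]))"
    by (metis mset_filter mset_sort size_mset)
  also have "\<dots> = card {j. j<n \<and> P (v j)}" unfolding length_filter_conv_card
    by (rule arg_cong[where f=card]) auto
  finally show ?thesis by simp
qed

lemma kth_props:
  assumes "1 \<le> k" "k \<le> n"
  shows "card {j. j<n \<and> v j > kth_largest n k v} < k"
    and "k \<le> card {j. j<n \<and> v j \<ge> kth_largest n k v}"
proof -
  define M where "M = sort (map v [0..<n])"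
  have lM: "length M = n" by (simp add: M_def)
  have sM: "sorted M" by (simp add: M_def)
  define p where "p = n - k"
  have kth: "kth_largest n k v = M ! p"
    unfolding kth_largest_def M_def[symmetric] p_def using assms lM
    by (simp add: rev_nth)
  have "card {j. j<n \<and> v j > M!p} = card {i. i < n \<and> M!i > M!p}"
    using card_count[of n "\<lambda>x. x > M!p" v] length_filter_conv_card[of "\<lambda>x. x > M!p" M] lM M_def by simp
  also have "\<dots> \<le> card {p<..<n}"
  proof (rule card_mono)
    show "{i. i < n \<and> M!i > M!p} \<subseteq> {p<..<n}"
    proof
      fix i assume i: "i \<in> {i. i < n \<and> M!i > M!p}"
      have "\<not> i \<le> p"
      proof
        assume "i \<le> p"
        then have "M!i \<le> M!p" using sorted_nth_mono[OF sM] lM p_def assms by auto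
        then show False using i by auto
      qed
      then show "i \<in> {p<..<n}" using i by auto
    qed
  qed simp
  also have "\<dots> < k" using assms p_def by simp
  finally show "card {j. j<n \<and> v j > kth_largest n k v} < k" using kth by simp
  have "k = card {p..<n}" using assms p_def by simp
  also have "\<dots> \<le> card {i. i < n \<and> M!i \<ge> M!p}"
  proof (rule card_mono)
    show "{p..<n} \<subseteq> {i. i < n \<and> M!i \<ge> M!p}"
      using sorted_nth_mono[OF sM] lM by auto
  qed simp
  also have "\<dots> = card {j. j<n \<and> v j \<ge> M!p}"
    using card_count[of n "\<lambda>x. x \<ge> M!p" v] length_filter_conv_card[of "\<lambda>x. x \<ge> M!p" M] lM M_def by simp
  finally show "k \<le> card {j. j<n \<and> v j \<ge> kth_largest n k v}" using kth by simp
qed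

lemma topk_eventually:
  fixes Y :: "nat \<Rightarrow> nat \<Rightarrow> real"
  assumes k: "1 \<le> k" "k \<le> n" and conv: "\<And>j. j<n \<Longrightarrow> (\<lambda>t. Y t j) \<longlonglongrightarrow> y j"
  shows "eventually (\<lambda>t. topk n k (Y t) \<subseteq> {j. j<n \<and> y j \<ge> kth_largest n k y}) sequentially"
proof -
  define K where "K = kth_largest n k y"
  define G where "G = {j. j<n \<and> y j \<ge> K}"
  have cG: "k \<le> card G" using kth_props(2)[OF k] G_def K_def by simp
  have fG: "finite G" unfolding G_def by simp
  have "\<forall>j\<in>{..<n}. eventually (\<lambda>t. y j < K \<longrightarrow> j \<notin> topk n k (Y t)) sequentially"
  proof
    fix j assume j: "j \<in> {..<n}"
    show "eventually (\<lambda>t. y j < K \<longrightarrow> j \<notin> topk n k (Y t)) sequentially"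
    proof (cases "y j < K")
      case False then show ?thesis by simp
    next
      case True
      define c where "c = (y j + K)/2"
      have e1: "eventually (\<lambda>t. Y t j < c) sequentially"
        using order_tendstoD(2)[OF conv[of j]] j True c_def by auto
      have "\<forall>j'\<in>G. eventually (\<lambda>t. Y t j' > c) sequentially"
      proof
        fix j' assume "j' \<in> G"
        then have "j' < n" "y j' > c" using G_def c_def True by auto
        then show "eventually (\<lambda>t. Y t j' > c) sequentially"
          using order_tendstoD(1)[OF conv[of j']] by auto
      qed
      then have e2: "eventually (\<lambda>t. \<forall>j'\<in>G. Y t j' > c) sequentially"
        by (rule eventually_ball_finite[OF fG])
      show ?thesis using e1 e2
      proof eventually_elim
        case (elim t)
        show ?case
        proof (intro impI notI)
          assume "j \<in> topk n k (Y t)"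
          then have jt: "Y t j \<ge> kth_largest n k (Y t)" unfolding topk_def by simp
          have "G \<subseteq> {j'. j'<n \<and> Y t j' > kth_largest n k (Y t)}"
            using elim jt G_def by fastforce
          then have "card G \<le> card {j'. j'<n \<and> Y t j' > kth_largest n k (Y t)}"
            by (rule card_mono[rotated]) simp
          with kth_props(1)[OF k, of "Y t"] cG show False by simp
        qed
      qed
    qed
  qed
  then have "eventually (\<lambda>t. \<forall>j\<in>{..<n}. y j < K \<longrightarrow> j \<notin> topk n k (Y t)) sequentially"
    by (rule eventually_ball_finite[OF finite_lessThan])
  then show ?thesis
    by (rule eventually_mono) (auto simp: topk_def K_def not_less)
qed

lemma edge_lemma:
  fixes X :: "nat \<Rightarrow> nat \<Rightarrow> nat \<Rightarrow> real" and Xinf :: "nat \<Rightarrow> nat \<Rightarrow> real"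
  assumes k: "1 \<le> k" "k \<le> n"
    and gd: "gossip_dynamics n k X i1 i2"
    and convA: "\<forall>i<m. \<forall>j<n. (\<lambda>t. X t i j) \<longlonglongrightarrow> Xinf i j"
    and inf: "infinite (act_times i1 i2 a b)" and am: "a < m" and bm: "b < m"
  shows "kth_largest n k (Xinf b) \<le> kth_largest n k (Xinf a)"
    and "\<exists>j\<in>S_inf n k X i1 i2 a b. Xinf a j \<le> kth_largest n k (Xinf a)"
    and "\<forall>j\<in>S_inf n k X i1 i2 a b. Xinf a j = Xinf b j \<and>
            (Xinf a j \<ge> kth_largest n k (Xinf a) \<or> Xinf b j \<ge> kth_largest n k (Xinf b))"
    and "S_inf n k X i1 i2 a b \<subseteq> {..<n}"
proof -
  have conv: "(\<lambda>t. X t i j) \<longlonglongrightarrow> Xinf i j" if "i < m" "j < n" for i j using convA that by blast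
  define \<beta> where "\<beta> = beta i1 i2 a b"
  define S where "S = S_inf n k X i1 i2 a b"
  define sel where "sel = sel_set n k X i1 i2"
  define Ka where "Ka = kth_largest n k (Xinf a)"
  define Kb where "Kb = kth_largest n k (Xinf b)"
  have bin: "\<beta> s \<in> act_times i1 i2 a b" for s
    unfolding \<beta>_def beta_def using enumerate_in_set[OF inf] .
  have pair: "{i1 (\<beta> s), i2 (\<beta> s)} = {a,b}" for s
    using bin[of s] by (simp add: act_times_def)
  have selab: "sel (\<beta> s) = topk n k (X (\<beta> s) a) \<union> topk n k (X (\<beta> s) b)" for s
    using pair[of s] unfolding sel_def sel_set_def by (auto simp: doubleton_eq_iff)
  have bge: "s \<le> \<beta> s" for s
    unfolding \<beta>_def beta_def by (rule strict_mono_imp_increasing[OF strict_mono_enumerate[OF inf]])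
  have Sdef: "j \<in> S \<longleftrightarrow> (\<forall>t. \<exists>s\<ge>t. j \<in> sel (\<beta> s))" for j
    unfolding S_def S_inf_def sel_def \<beta>_def by auto
  have topk_lt: "topk n k v \<subseteq> {..<n}" for v unfolding topk_def by auto
  have sel_lt: "sel (\<beta> s) \<subseteq> {..<n}" for s using selab topk_lt by blast
  show Slt: "S_inf n k X i1 i2 a b \<subseteq> {..<n}"
  proof
    fix j assume "j \<in> S_inf n k X i1 i2 a b"
    then obtain s where "j \<in> sel (\<beta> s)" using Sdef S_def by blast
    then show "j \<in> {..<n}" using sel_lt by blast
  qed
  have eqlim: "Xinf a j = Xinf b j" if jS: "j \<in> S" for j
  proof (rule ccontr)
    assume ne: "Xinf a j \<noteq> Xinf b j"
    have jn: "j < n" using jS Slt S_def by auto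
    define f where "f t = X (Suc t) a j - X (Suc t) b j" for t
    have "f \<longlonglongrightarrow> Xinf a j - Xinf b j"
      unfolding f_def by (intro tendsto_diff LIMSEQ_Suc conv am bm jn)
    then have "eventually (\<lambda>t. f t \<noteq> 0) sequentially"
      by (rule tendsto_imp_eventually_ne) (use ne in simp)
    then obtain N where N: "\<And>t. t \<ge> N \<Longrightarrow> f t \<noteq> 0" by (auto simp: eventually_sequentially)
    obtain s where s: "s \<ge> N" "j \<in> sel (\<beta> s)" using jS Sdef by blast
    have "a \<in> {i1 (\<beta> s), i2 (\<beta> s)}" "b \<in> {i1 (\<beta> s), i2 (\<beta> s)}" using pair[of s] by auto
    then have "f (\<beta> s) = 0" using gd s(2) unfolding f_def gossip_dynamics_def sel_def by simp
    moreover have "\<beta> s \<ge> N" using bge[of s] s(1) by simp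
    ultimately show False using N by blast
  qed
  have Ea: "eventually (\<lambda>t. topk n k (X t a) \<subseteq> {j. j<n \<and> Xinf a j \<ge> Ka}) sequentially"
    unfolding Ka_def by (rule topk_eventually[OF k, of "\<lambda>t. X t a"]) (rule conv[OF am])
  have Eb: "eventually (\<lambda>t. topk n k (X t b) \<subseteq> {j. j<n \<and> Xinf b j \<ge> Kb}) sequentially"
    unfolding Kb_def by (rule topk_eventually[OF k, of "\<lambda>t. X t b"]) (rule conv[OF bm])
  obtain N1 where N1: "\<And>t. t \<ge> N1 \<Longrightarrow> topk n k (X t a) \<subseteq> {j. j<n \<and> Xinf a j \<ge> Ka}
      \<and> topk n k (X t b) \<subseteq> {j. j<n \<and> Xinf b j \<ge> Kb}"
    using eventually_conj[OF Ea Eb] by (auto simp: eventually_sequentially)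
  have "\<forall>j\<in>{..<n}. eventually (\<lambda>s. j \<notin> S \<longrightarrow> j \<notin> sel (\<beta> s)) sequentially"
  proof
    fix j assume "j \<in> {..<n}"
    show "eventually (\<lambda>s. j \<notin> S \<longrightarrow> j \<notin> sel (\<beta> s)) sequentially"
    proof (cases "j \<in> S")
      case True then show ?thesis by simp
    next
      case False
      then obtain t where "\<forall>s\<ge>t. j \<notin> sel (\<beta> s)" using Sdef by blast
      then show ?thesis by (auto simp: eventually_sequentially)
    qed
  qed
  then have "eventually (\<lambda>s. \<forall>j\<in>{..<n}. j \<notin> S \<longrightarrow> j \<notin> sel (\<beta> s)) sequentially"
    by (rule eventually_ball_finite[OF finite_lessThan])
  then obtain N2 where N2: "\<And>s. s \<ge> N2 \<Longrightarrow> sel (\<beta> s) \<subseteq> S"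
    using sel_lt unfolding eventually_sequentially by blast
  define s0 where "s0 = max N1 N2"
  have s0a: "\<beta> s0 \<ge> N1" using bge[of s0] s0_def by simp
  have Ta: "topk n k (X (\<beta> s0) a) \<subseteq> S" "topk n k (X (\<beta> s0) b) \<subseteq> S"
    using N2[of s0] selab[of s0] s0_def by auto
  have Tg: "topk n k (X (\<beta> s0) a) \<subseteq> {j. j<n \<and> Xinf a j \<ge> Ka}"
     "topk n k (X (\<beta> s0) b) \<subseteq> {j. j<n \<and> Xinf b j \<ge> Kb}"
    using N1[OF s0a] by auto
  have cT: "k \<le> card (topk n k v)" for v using kth_props(2)[OF k, of v] unfolding topk_def by simp
  show "kth_largest n k (Xinf b) \<le> kth_largest n k (Xinf a)"
  proof (rule ccontr)
    assume "\<not> ?thesis"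
    then have lt: "Ka < Kb" using Ka_def Kb_def by simp
    have "topk n k (X (\<beta> s0) b) \<subseteq> {j. j<n \<and> Xinf a j > Ka}"
    proof
      fix j assume j: "j \<in> topk n k (X (\<beta> s0) b)"
      then have "j \<in> S" "j < n" "Xinf b j \<ge> Kb" using Ta Tg by auto
      then show "j \<in> {j. j<n \<and> Xinf a j > Ka}" using eqlim lt by auto
    qed
    then have "card (topk n k (X (\<beta> s0) b)) \<le> card {j. j<n \<and> Xinf a j > Ka}"
      by (rule card_mono[rotated]) simp
    with cT[of "X (\<beta> s0) b"] kth_props(1)[OF k, of "Xinf a"] Ka_def show False by simp
  qed
  show "\<exists>j\<in>S_inf n k X i1 i2 a b. Xinf a j \<le> kth_largest n k (Xinf a)"
  proof (rule ccontr)
    assume "\<not> ?thesis"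
    then have "topk n k (X (\<beta> s0) a) \<subseteq> {j. j<n \<and> Xinf a j > Ka}"
      using Ta(1) Tg(1) S_def Ka_def by fastforce
    then have "card (topk n k (X (\<beta> s0) a)) \<le> card {j. j<n \<and> Xinf a j > Ka}"
      by (rule card_mono[rotated]) simp
    with cT[of "X (\<beta> s0) a"] kth_props(1)[OF k, of "Xinf a"] Ka_def show False by simp
  qed
  show "\<forall>j\<in>S_inf n k X i1 i2 a b. Xinf a j = Xinf b j \<and>
            (Xinf a j \<ge> kth_largest n k (Xinf a) \<or> Xinf b j \<ge> kth_largest n k (Xinf b))"
  proof
    fix j assume jS: "j \<in> S_inf n k X i1 i2 a b"
    then obtain s where s: "s \<ge> N1" "j \<in> sel (\<beta> s)" using Sdef S_def by blast
    have "\<beta> s \<ge> N1" using bge[of s] s by simp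
    then have "Xinf a j \<ge> Ka \<or> Xinf b j \<ge> Kb" using N1 s(2) selab[of s] by blast
    then show "Xinf a j = Xinf b j \<and>
            (Xinf a j \<ge> kth_largest n k (Xinf a) \<or> Xinf b j \<ge> kth_largest n k (Xinf b))"
      using eqlim jS S_def Ka_def Kb_def by auto
  qed
qed

lemma edge_info:
  assumes "{a, b} \<in> edges i1 i2" and i12: "\<And>t. i1 t < m" "\<And>t. i2 t < m"
  shows "infinite (act_times i1 i2 a b)" "a < m" "b < m"
proof -
  obtain c d where cd: "{a,b} = {c,d}" "infinite (act_times i1 i2 c d)"
    using assms(1) unfolding edges_def by blast
  have "act_times i1 i2 a b = act_times i1 i2 c d" unfolding act_times_def using cd(1) by simp
  then show inf: "infinite (act_times i1 i2 a b)" using cd(2) by simp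
  then obtain t where "t \<in> act_times i1 i2 a b" by (metis ex_in_conv finite.emptyI)
  then have "{i1 t, i2 t} = {a,b}" by (simp add: act_times_def)
  then have "a \<in> {i1 t, i2 t}" "b \<in> {i1 t, i2 t}" by auto
  then show "a < m" "b < m" using i12[of t] by auto
qed

theorem mainTheorem5:
  fixes m n k :: nat
    and i1 i2 :: "nat \<Rightarrow> nat"
    and X :: "nat \<Rightarrow> nat \<Rightarrow> nat \<Rightarrow> real"
    and Xinf :: "nat \<Rightarrow> nat \<Rightarrow> real"
  assumes "m \<ge> 2" and "n \<ge> 1" and "1 \<le> k" and "k \<le> n"
    and "\<And>t. i1 t < m" and "\<And>t. i2 t < m" and "\<And>t. i1 t \<noteq> i2 t"
    and "graph_connected m (edges i1 i2)"
    and "gossip_dynamics n k X i1 i2"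
    and "\<And>i j. i < m \<Longrightarrow> j < n \<Longrightarrow> (\<lambda>t. X t i j) \<longlonglongrightarrow> Xinf i j"
    and "{a, b} \<in> edges i1 i2" and "{a', b'} \<in> edges i1 i2"
  shows "alpha n k X i1 i2 Xinf a b = alpha n k X i1 i2 Xinf a' b'"
proof -
  note k = assms(3,4)
  note i12 = assms(5,6)
  note gd = assms(9)
  have conv: "\<forall>i<m. \<forall>j<n. (\<lambda>t. X t i j) \<longlonglongrightarrow> Xinf i j" using assms(10) by blast
  note EL = edge_lemma[where m=m and X=X and Xinf=Xinf and n=n and k=k, OF k gd conv]
  define K where "K i = kth_largest n k (Xinf i)" for i
  have keq: "K x = K y" if "{x,y} \<in> edges i1 i2" for x y
  proof -
    note e = edge_info[OF that i12]
    have e2: "infinite (act_times i1 i2 y x)" using e(1) by (simp add: act_times_def insert_commute)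
    show ?thesis using EL(1)[OF e(1) e(2,3)] EL(1)[OF e2 e(3,2)]
      unfolding K_def by simp
  qed
  have alpha_eq: "alpha n k X i1 i2 Xinf x y = K x" if xy: "{x,y} \<in> edges i1 i2" for x y
  proof -
    note e = edge_info[OF that i12]
    define S where "S = S_inf n k X i1 i2 x y"
    have fS: "finite S" using EL(4)[OF e(1) e(2,3)] S_def finite_subset by blast
    obtain j0 where j0: "j0 \<in> S" "Xinf x j0 \<le> K x"
      using EL(2)[OF e(1) e(2,3)] S_def K_def by auto
    have low: "\<forall>j\<in>S. Xinf x j \<ge> K x"
      using EL(3)[OF e(1) e(2,3)] keq[OF xy] S_def K_def by fastforce
    have "Min ((\<lambda>j. Xinf x j) ` S) = K x"
    proof (rule antisym)
      show "Min ((\<lambda>j. Xinf x j) ` S) \<le> K x"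
        using Min_le[of "(\<lambda>j. Xinf x j) ` S" "Xinf x j0"] fS j0 by (meson finite_imageI image_eqI order_trans)
      show "K x \<le> Min ((\<lambda>j. Xinf x j) ` S)"
        using fS j0 low by (subst Min_ge_iff) auto
    qed
    then show ?thesis unfolding alpha_def S_def .
  qed
  have am: "a < m" and am': "a' < m" using edge_info[OF assms(11) i12] edge_info[OF assms(12) i12] by auto
  have "(a, a') \<in> (Restr {(x, y). {x, y} \<in> edges i1 i2} {0..<m})\<^sup>*"
    using assms(8) am am' unfolding graph_connected_def by blast
  then have "K a = K a'"
  proof (induction rule: rtrancl_induct)
    case base then show ?case by simp
  next
    case (step y z)
    then show ?case using keq[of y z] by auto
  qed
  then show ?thesis using alpha_eq[OF assms(11)] alpha_eq[OF assms(12)] by simp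
qed

end
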